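(* For every $n\ge3$ and $d=\binom n2$ there is a $d$-dimensional $0/1$-polytope in $\mathbb{R}^d$ that is $3$-neighborly (every three distinct vertices span a triangular face) and has more than $2^{\sqrt{2d}-1/2}$ vertices.
   Context: A $0/1$-polytope is the convex hull of a subset of $\{0,1\}^d$. *)

theory Defs
  imports "HOL-Analysis.Analysis"
begin

definition zero_one_points :: "(real^'d) set" where
  "zero_one_points = {x. \<forall>i. x $ i = 0 \<or> x $ i = 1}"

definition zero_one_polytope :: "(real^'d) set \<Rightarrow> bool" where
  "zero_one_polytope P \<longleftrightarrow> (\<exists>V. V \<subseteq> zero_one_points \<and> P = convex hull V)"

definition vertices_of :: "'a::real_vector set \<Rightarrow> 'a set" where
  "vertices_of P = {v. v extreme_point_of P}"

definition three_neighborly :: "'a::real_vector set \<Rightarrow> bool" where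
  "three_neighborly P \<longleftrightarrow>
     (\<forall>u v w. u \<in> vertices_of P \<and> v \<in> vertices_of P \<and> w \<in> vertices_of P \<and>
        u \<noteq> v \<and> u \<noteq> w \<and> v \<noteq> w \<longrightarrow> convex hull {u, v, w} face_of P)"

end

theory Submission
  imports Defs
begin

lemma exposed_face:
  fixes V :: "('a::euclidean_space) set"
  assumes fin: "finite V" and UV: "U \<subseteq> V"
    and sep: "\<And>D. D \<in> V - U \<Longrightarrow> \<exists>a b. (\<forall>v\<in>V. a \<bullet> v \<le> b) \<and> (\<forall>u\<in>U. a \<bullet> u = b) \<and> a \<bullet> D < b"
  shows "convex hull U face_of convex hull V"
proof -
  obtain A B where AB: "\<And>D. D \<in> V - U \<Longrightarrow> (\<forall>v\<in>V. A D \<bullet> v \<le> B D) \<and> (\<forall>u\<in>U. A D \<bullet> u = B D) \<and> A D \<bullet> D < B D"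
    using sep by metis
  define a where "a = (\<Sum>D\<in>V-U. A D)"
  define b where "b = (\<Sum>D\<in>V-U. B D)"
  have ainner: "a \<bullet> x = (\<Sum>D\<in>V-U. A D \<bullet> x)" for x
    unfolding a_def by (simp add: inner_sum_left)
  have hU: "\<forall>u\<in>U. a \<bullet> u = b"
    using AB UV unfolding b_def ainner by (auto intro: sum.cong)
  have hD: "a \<bullet> D < b" if D: "D \<in> V - U" for D
  proof -
    have "(\<Sum>E\<in>V-U. A E \<bullet> D) < (\<Sum>E\<in>V-U. B E)"
      apply (rule sum_strict_mono_ex1)
      using fin AB D by (auto)
    then show ?thesis unfolding ainner b_def .
  qed
  show ?thesis
  proof (rule face_of_convex_hulls[OF fin UV], rule ccontr)
    assume "affine hull U \<inter> convex hull (V - U) \<noteq> {}"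
    then obtain x where x1: "x \<in> affine hull U" and x2: "x \<in> convex hull (V - U)" by blast
    have "affine hull U \<subseteq> {x. a \<bullet> x = b}"
      by (rule hull_minimal) (use hU affine_hyperplane in auto)
    with x1 have "a \<bullet> x = b" by auto
    moreover have "convex hull (V - U) \<subseteq> {x. a \<bullet> x < b}"
      by (rule hull_minimal) (use hD convex_halfspace_lt in auto)
    with x2 have "a \<bullet> x < b" by auto
    ultimately show False by simp
  qed
qed

lemma zero_one_extreme:
  fixes V :: "(real^'d) set"
  assumes fin: "finite V" and V01: "V \<subseteq> zero_one_points" and v: "v \<in> V"
  shows "v extreme_point_of convex hull V"
proof -
  have "convex hull {v} face_of convex hull V"
  proof (rule exposed_face[OF fin])
    show "{v} \<subseteq> V" using v by simp
    fix D assume D: "D \<in> V - {v}"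
    define a :: "real^'d" where "a = (\<chi> k. 2 * v $ k - 1)"
    have v01: "\<forall>k. v $ k = 0 \<or> v $ k = 1" using V01 v by (auto simp: zero_one_points_def)
    have le: "(a $ k) * (x $ k) \<le> (a $ k) * (v $ k)" if "x \<in> V" for x k
    proof -
      have "x $ k = 0 \<or> x $ k = 1" using V01 that by (auto simp: zero_one_points_def)
      then show ?thesis using v01[rule_format, of k] unfolding a_def by auto
    qed
    have D01: "\<forall>k. D $ k = 0 \<or> D $ k = 1" using V01 D by (auto simp: zero_one_points_def)
    obtain k where k: "D $ k \<noteq> v $ k" using D by (metis DiffE singletonI vec_eq_iff)
    have lt: "(a $ k) * (D $ k) < (a $ k) * (v $ k)"
      using D01[rule_format, of k] v01[rule_format, of k] k unfolding a_def by auto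
    show "\<exists>a b. (\<forall>x\<in>V. a \<bullet> x \<le> b) \<and> (\<forall>u\<in>{v}. a \<bullet> u = b) \<and> a \<bullet> D < b"
    proof (intro exI conjI ballI)
      fix x assume "x \<in> V"
      then show "a \<bullet> x \<le> a \<bullet> v" unfolding inner_vec_def
        using le by (auto intro: sum_mono)
    next
      show "a \<bullet> D < a \<bullet> v" unfolding inner_vec_def
        apply (rule sum_strict_mono_ex1) using le D lt by auto
    qed auto
  qed
  then show ?thesis by (simp add: face_of_singleton)
qed

definition EE :: "nat \<Rightarrow> (nat \<times> nat) set" where
  "EE n = {(i,j). i < j \<and> j < n}"

lemma EE_Suc: "EE (Suc n) = EE n \<union> (\<lambda>i. (i,n)) ` {..<n}"
  unfolding EE_def by auto

lemma finite_EE: "finite (EE n)"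
  unfolding EE_def by (rule finite_subset[of _ "{..<n} \<times> {..<n}"]) auto

lemma card_EE: "card (EE n) = n choose 2"
proof (induction n)
  case 0 then show ?case by (simp add: EE_def)
next
  case (Suc n)
  have disj: "EE n \<inter> (\<lambda>i. (i,n)) ` {..<n} = {}" unfolding EE_def by auto
  have "card (EE (Suc n)) = card (EE n) + card ((\<lambda>i. (i,n)) ` {..<n})"
    unfolding EE_Suc by (rule card_Un_disjoint) (use finite_EE disj in auto)
  also have "card ((\<lambda>i. (i,n)) ` {..<n}) = n"
    by (subst card_image) (auto simp: inj_on_def)
  finally have "card (EE (Suc n)) = (n choose 2) + n" using Suc by simp
  also have "\<dots> = Suc n choose 2"
    by (simp add: choose_two) (cases n; simp; cases "n - 1"; simp add: algebra_simps; arith)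
  finally show ?case .
qed

definition cutv :: "('d \<Rightarrow> nat \<times> nat) \<Rightarrow> nat set \<Rightarrow> real^'d" where
  "cutv g S = (\<chi> k. if (fst (g k) \<in> S) \<noteq> (snd (g k) \<in> S) then 1 else 0)"

definition edge :: "('d \<Rightarrow> nat \<times> nat) \<Rightarrow> nat \<Rightarrow> nat \<Rightarrow> 'd" where
  "edge g i j = inv_into UNIV g (min i j, max i j)"

lemma cut_edge:
  assumes g: "bij_betw g UNIV (EE n)" and ij: "i \<noteq> j" "i < n" "j < n"
  shows "cutv g S $ edge g i j = (if (i \<in> S) \<noteq> (j \<in> S) then 1 else 0)"
proof -
  have "(min i j, max i j) \<in> EE n" using ij by (auto simp: EE_def min_def max_def)
  then have "g (edge g i j) = (min i j, max i j)"
    unfolding edge_def using g by (simp add: bij_betw_def f_inv_into_f)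
  then show ?thesis unfolding cutv_def using ij by (auto simp: min_def max_def)
qed

definition tri :: "('d \<Rightarrow> nat \<times> nat) \<Rightarrow> nat \<Rightarrow> nat \<Rightarrow> nat \<Rightarrow> nat set \<Rightarrow> real^'d" where
  "tri g i j k D = (1 - 2 * cutv g D $ edge g i j) *\<^sub>R axis (edge g i j) 1
     + (1 - 2 * cutv g D $ edge g i k) *\<^sub>R axis (edge g i k) 1
     + (1 - 2 * cutv g D $ edge g j k) *\<^sub>R axis (edge g j k) 1"

definition nc :: "nat set \<Rightarrow> nat \<Rightarrow> nat \<Rightarrow> nat \<Rightarrow> bool" where
  "nc Z i j k \<longleftrightarrow> \<not> ((i \<in> Z) = (j \<in> Z) \<and> (j \<in> Z) = (k \<in> Z))"

lemma tri_inner: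
  assumes g: "bij_betw g UNIV (EE n)" and ijk: "i \<noteq> j" "i \<noteq> k" "j \<noteq> k" "i < n" "j < n" "k < n"
  shows "tri g i j k D \<bullet> cutv g S \<le> tri g i j k D \<bullet> cutv g D + 2"
    and "tri g i j k D \<bullet> cutv g S = tri g i j k D \<bullet> cutv g D + 2 \<longleftrightarrow> nc (S - D \<union> (D - S)) i j k"
proof -
  have e: "tri g i j k D \<bullet> x = (1 - 2 * cutv g D $ edge g i j) * x $ edge g i j
     + (1 - 2 * cutv g D $ edge g i k) * x $ edge g i k + (1 - 2 * cutv g D $ edge g j k) * x $ edge g j k" for x
    unfolding tri_def by (simp add: inner_add_left inner_axis')
  show "tri g i j k D \<bullet> cutv g S \<le> tri g i j k D \<bullet> cutv g D + 2"
    unfolding e using ijk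
    by (simp add: cut_edge[OF g]; cases "i \<in> S"; cases "j \<in> S"; cases "k \<in> S"; cases "i \<in> D"; cases "j \<in> D"; cases "k \<in> D"; simp)
  show "tri g i j k D \<bullet> cutv g S = tri g i j k D \<bullet> cutv g D + 2 \<longleftrightarrow> nc (S - D \<union> (D - S)) i j k"
    unfolding e nc_def using ijk
    by (simp add: cut_edge[OF g]; cases "i \<in> S"; cases "j \<in> S"; cases "k \<in> S"; cases "i \<in> D"; cases "j \<in> D"; cases "k \<in> D"; simp)
qed

lemma transv1:
  assumes n: "n \<ge> 3" and X: "X \<subseteq> {1..<n}" and Y: "Y \<subseteq> {1..<n}" and Z: "Z \<subseteq> {1..<n}" "Z \<noteq> {}"
    and j: "j \<in> X" "j \<in> Y"
  shows "\<exists>i j k. i \<noteq> j \<and> i \<noteq> k \<and> j \<noteq> k \<and> i < n \<and> j < n \<and> k < n \<and> nc X i j k \<and> nc Y i j k \<and> nc Z i j k"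
proof -
  obtain k where k: "k \<in> Z" using Z by auto
  show ?thesis
  proof (cases "k = j")
    case False
    then show ?thesis using X Y Z j k
      by (intro exI[of _ 0] exI[of _ j] exI[of _ k]) (auto simp: nc_def)
  next
    case True
    obtain k' where k': "k' \<in> {1..<n} - {j}"
      using n that[of 1] that[of 2] by (cases "j = 1") auto
    then show ?thesis using X Y Z j k True
      by (intro exI[of _ 0] exI[of _ j] exI[of _ k']) (auto simp: nc_def)
  qed
qed

lemma transv:
  assumes n: "n \<ge> 3" and X: "X \<subseteq> {1..<n}" "X \<noteq> {}" and Y: "Y \<subseteq> {1..<n}" "Y \<noteq> {}"
    and Z: "Z \<subseteq> {1..<n}" "Z \<noteq> {}"
  shows "\<exists>i j k. i \<noteq> j \<and> i \<noteq> k \<and> j \<noteq> k \<and> i < n \<and> j < n \<and> k < n \<and> nc X i j k \<and> nc Y i j k \<and> nc Z i j k"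
proof -
  consider (a) "X \<inter> Y \<noteq> {}" | (b) "X \<inter> Z \<noteq> {}" | (c) "Y \<inter> Z \<noteq> {}" | (d) "X \<inter> Y = {}" "X \<inter> Z = {}" "Y \<inter> Z = {}"
    by blast
  then show ?thesis
  proof cases
    case a then obtain j where "j \<in> X" "j \<in> Y" by auto
    then show ?thesis using transv1[OF n X(1) Y(1) Z] by blast
  next
    case b then obtain j where "j \<in> X" "j \<in> Z" by auto
    then show ?thesis using transv1[OF n X(1) Z(1) Y] by blast
  next
    case c then obtain j where "j \<in> Y" "j \<in> Z" by auto
    then show ?thesis using transv1[OF n Y(1) Z(1) X] by blast
  next
    case d
    obtain x y z where "x \<in> X" "y \<in> Y" "z \<in> Z" using X Y Z by blast
    then show ?thesis using d X Y Z
      by (intro exI[of _ x] exI[of _ y] exI[of _ z]) (auto simp: nc_def)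
  qed
qed

lemma span_full:
  assumes g: "bij_betw g UNIV (EE n)"
  shows "span (cutv g ` Pow {1..<n}) = (UNIV :: (real^'d) set)"
proof -
  have ax: "axis l 1 \<in> span (cutv g ` Pow {1..<n})" for l :: 'd
  proof -
    obtain i j where gl: "g l = (i,j)" by (cases "g l")
    have "g l \<in> EE n" using g by (auto simp: bij_betw_def)
    then have ij: "i < j" "j < n" using gl unfolding EE_def by auto
    define X where "X = (if i = 0 then {1..<n} else {i})"
    define Y where "Y = {j}"
    have XY: "X \<in> Pow {1..<n}" "Y \<in> Pow {1..<n}" "(X - Y \<union> (Y - X)) \<in> Pow {1..<n}"
      using ij unfolding X_def Y_def by auto
    have eq: "axis l 1 = (1/2) *\<^sub>R (cutv g X + cutv g Y - cutv g (X - Y \<union> (Y - X)))"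
    proof (rule vec_eq_iff[THEN iffD2, rule_format])
      fix l'
      obtain a b where gl': "g l' = (a,b)" by (cases "g l'")
      have "g l' \<in> EE n" using g by (auto simp: bij_betw_def)
      then have ab: "a < b" "b < n" using gl' unfolding EE_def by auto
      have lab: "l' = l \<longleftrightarrow> (a,b) = (i,j)" using inj_onD[OF bij_betw_imp_inj_on[OF g]] gl gl' by fastforce
      have px: "((a \<in> X) \<noteq> (b \<in> X)) \<longleftrightarrow> (a = i \<or> b = i)"
        using ab ij unfolding X_def by (cases "i = 0") auto
      have py: "((a \<in> Y) \<noteq> (b \<in> Y)) \<longleftrightarrow> (a = j \<or> b = j)"
        using ab ij unfolding Y_def by auto
      have pxy: "((a \<in> X - Y \<union> (Y - X)) \<noteq> (b \<in> X - Y \<union> (Y - X))) \<longleftrightarrow> ((a \<in> X) \<noteq> (b \<in> X)) \<noteq> ((a \<in> Y) \<noteq> (b \<in> Y))"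
        by blast
      have pp: "(a = i \<or> b = i) \<and> (a = j \<or> b = j) \<longleftrightarrow> (a,b) = (i,j)" using ab ij by auto
      have r: "((1/2) *\<^sub>R (cutv g X + cutv g Y - cutv g (X - Y \<union> (Y - X)))) $ l' =
          (1/2) * ((if (a \<in> X) \<noteq> (b \<in> X) then 1 else 0) + (if (a \<in> Y) \<noteq> (b \<in> Y) then 1 else 0)
           - (if (a \<in> X - Y \<union> (Y - X)) \<noteq> (b \<in> X - Y \<union> (Y - X)) then 1 else 0))"
        unfolding cutv_def using gl' by simp
      show "axis l 1 $ l' = ((1/2) *\<^sub>R (cutv g X + cutv g Y - cutv g (X - Y \<union> (Y - X)))) $ l'"
        unfolding r pxy px py axis_def using lab pp by auto
    qed
    show ?thesis unfolding eq
      by (intro span_mul span_diff span_add span_base) (use XY in auto)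
  qed
  have "(Basis :: (real^'d) set) \<subseteq> span (cutv g ` Pow {1..<n})"
    using ax by (auto simp: Basis_vec_def)
  then have "span (Basis :: (real^'d) set) \<subseteq> span (cutv g ` Pow {1..<n})"
    by (metis span_mono span_span)
  then show ?thesis by (simp add: span_Basis top.extremum_uniqueI)
qed

theorem mainTheorem14:
  fixes n :: nat
  assumes "n \<ge> 3" and "CARD('d::finite) = n choose 2"
  shows "\<exists>P :: (real^'d) set. zero_one_polytope P \<and> aff_dim P = int CARD('d) \<and>
           three_neighborly P \<and>
           real (card (vertices_of P)) > 2 powr (sqrt (2 * real CARD('d)) - 1/2)"
proof -
  have n: "n \<ge> 3" using assms(1) .
  obtain g :: "'d \<Rightarrow> nat \<times> nat" where g: "bij_betw g UNIV (EE n)"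
    using finite_same_card_bij[of "UNIV :: 'd set" "EE n"] finite_EE assms(2) card_EE by auto
  define V where "V = cutv g ` Pow {1..<n}"
  define P where "P = convex hull V"
  have finV: "finite V" unfolding V_def by simp
  have c01: "cutv g S $ i = 0 \<or> cutv g S $ i = 1" for S i unfolding cutv_def by simp
  have V01: "V \<subseteq> zero_one_points" unfolding V_def zero_one_points_def using c01 by auto
  have vert: "vertices_of P = V"
  proof
    show "vertices_of P \<subseteq> V" unfolding vertices_of_def P_def
      using extreme_point_of_convex_hull by auto
    show "V \<subseteq> vertices_of P" unfolding vertices_of_def P_def
      using zero_one_extreme[OF finV V01] by auto
  qed
  have inj: "inj_on (cutv g) (Pow {1..<n})"
  proof (rule inj_onI)
    fix S T assume S: "S \<in> Pow {1..<n}" and T: "T \<in> Pow {1..<n}" and eq: "cutv g S = cutv g T"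
    show "S = T"
    proof (rule set_eqI)
      fix x
      show "x \<in> S \<longleftrightarrow> x \<in> T"
      proof (cases "1 \<le> x \<and> x < n")
        case True
        have "cutv g S $ edge g 0 x = cutv g T $ edge g 0 x" using eq by simp
        have e: "cutv g Q $ edge g 0 x = (if x \<in> Q then 1 else 0)" if "Q \<in> Pow {1..<n}" for Q
        proof -
          have "0 \<notin> Q" using that by auto
          moreover have "0 \<noteq> x" "0 < n" "x < n" using True by auto
          ultimately show ?thesis using cut_edge[OF g, of 0 x Q] by simp
        qed
        have "(if x \<in> S then 1 else 0::real) = (if x \<in> T then 1 else 0)"
          using \<open>cutv g S $ edge g 0 x = cutv g T $ edge g 0 x\<close> unfolding e[OF S] e[OF T] .
        then show ?thesis by (cases "x \<in> S"; cases "x \<in> T") simp_all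
      next
        case False then show ?thesis using S T by auto
      qed
    qed
  qed
  have cardV: "card V = 2 ^ (n - 1)"
    unfolding V_def using card_image[OF inj] by (simp add: card_Pow)
  have zero: "0 \<in> V" unfolding V_def
    by (rule image_eqI[of _ _ "{}"]) (auto simp: cutv_def vec_eq_iff)
  have affdim: "aff_dim P = int CARD('d)"
  proof -
    have "aff_dim P = aff_dim V" unfolding P_def by (rule aff_dim_convex_hull)
    also have "\<dots> = int (dim ((+) (- 0) ` V))"
      by (rule aff_dim_eq_dim) (rule hull_inc[OF zero])
    also have "(+) (- 0) ` V = V" by force
    also have "dim V = dim (span V)" by (rule dim_span[symmetric])
    also have "span V = UNIV" unfolding V_def by (rule span_full[OF g])
    also have "dim (UNIV :: (real^'d) set) = CARD('d)" by simp
    finally show ?thesis .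
  qed
  have nb: "three_neighborly P"
    unfolding three_neighborly_def vert
  proof (intro allI impI)
    fix u v w assume H: "u \<in> V \<and> v \<in> V \<and> w \<in> V \<and> u \<noteq> v \<and> u \<noteq> w \<and> v \<noteq> w"
    obtain A B C where A: "A \<in> Pow {1..<n}" "u = cutv g A" and B: "B \<in> Pow {1..<n}" "v = cutv g B"
      and C: "C \<in> Pow {1..<n}" "w = cutv g C" using H unfolding V_def by blast
    show "convex hull {u, v, w} face_of P" unfolding P_def
    proof (rule exposed_face[OF finV])
      show "{u, v, w} \<subseteq> V" using H by auto
      fix D' assume D': "D' \<in> V - {u, v, w}"
      then obtain D where D: "D \<in> Pow {1..<n}" "D' = cutv g D" unfolding V_def by blast
      have ne: "D \<noteq> A" "D \<noteq> B" "D \<noteq> C" using D' D A B C by auto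
      have sd: "Q - D \<union> (D - Q) \<subseteq> {1..<n}" "Q - D \<union> (D - Q) \<noteq> {}" if "Q \<in> Pow {1..<n}" "Q \<noteq> D" for Q
        using that D(1) by auto
      obtain i j k where ijk: "i \<noteq> j" "i \<noteq> k" "j \<noteq> k" "i < n" "j < n" "k < n"
        and ncs: "nc (A - D \<union> (D - A)) i j k" "nc (B - D \<union> (D - B)) i j k" "nc (C - D \<union> (D - C)) i j k"
        using transv[OF n sd[OF A(1)] sd[OF B(1)] sd[OF C(1)]] ne by metis
      note ti = tri_inner[OF g ijk]
      have h1: "\<forall>x\<in>V. tri g i j k D \<bullet> x \<le> tri g i j k D \<bullet> cutv g D + 2"
        unfolding V_def using ti(1) by blast
      have h2: "\<forall>x\<in>{u, v, w}. tri g i j k D \<bullet> x = tri g i j k D \<bullet> cutv g D + 2"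
        using ti(2)[where S=A] ti(2)[where S=B] ti(2)[where S=C] ncs A(2) B(2) C(2) by auto
      have h3: "tri g i j k D \<bullet> D' < tri g i j k D \<bullet> cutv g D + 2" using D(2) by simp
      show "\<exists>a b. (\<forall>x\<in>V. a \<bullet> x \<le> b) \<and> (\<forall>x\<in>{u, v, w}. a \<bullet> x = b) \<and> a \<bullet> D' < b"
        using h1 h2 h3 by blast
    qed
  qed
  have ineq: "2 powr (sqrt (2 * real CARD('d)) - 1/2) < real (card (vertices_of P))"
  proof -
    have c: "2 * real CARD('d) = real n * (real n - 1)"
    proof -
      have ev: "even (n * (n - 1))" by (cases n) auto
      have "2 * (n choose 2) = n * (n - 1)" unfolding choose_two using ev by simp
      then have "real (2 * (n choose 2)) = real (n * (n - 1))" by simp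
      then show ?thesis using assms(2) n by (simp add: of_nat_diff)
    qed
    have "sqrt (2 * real CARD('d)) < sqrt ((real n - 1/2)^2)"
      unfolding c by (rule real_sqrt_less_mono) (simp add: power2_eq_square algebra_simps)
    also have "\<dots> = real n - 1/2" using n by simp
    finally have "2 powr (sqrt (2 * real CARD('d)) - 1/2) < 2 powr (real n - 1)"
      by (intro powr_less_mono) auto
    also have "\<dots> = 2 powr real (n - 1)" using n by (simp add: of_nat_diff)
    also have "\<dots> = 2 ^ (n - 1)" by (simp add: powr_realpow)
    finally show ?thesis using vert cardV by simp
  qed
  show ?thesis
    apply (rule exI[of _ P])
    using affdim nb ineq V01 unfolding zero_one_polytope_def P_def by auto
qed

end
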